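(* Let $(n_1, n_2, 2, n_4, \dots, n_k)$ be an integer partition (with nonincreasing parts) in which $n_2 \geqslant 3$, and suppose it corresponds to the eigenvalue $\lambda$. Then the partition $(n_1, n_2, 3, n_4, \dots, n_k)$ also corresponds to the eigenvalue $\lambda$.
   Context: An integer partition $(n_1,\dots,n_k)$ of $n$ (with $n_1\geqslant n_2\geqslant\dots\geqslant n_k\geqslant 1$ and $\sum_j n_j=n$) is said to correspond to the eigenvalue $\lambda$ if $\lambda=\sum_{j=1}^k \frac{n_j(n_j-2j+1)}{2}$; this number is the eigenvalue of the Transposition graph $T_n=\mathrm{Cay}(\mathrm{Sym}_n,T)$ ($T$ the set of all transpositions) associated with the irreducible character of $\mathrm{Sym}_n$ indexed by the partition. *)

theory Defs
  imports Complex_Main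
begin

definition is_int_partition :: "nat \<Rightarrow> nat list \<Rightarrow> bool" where
  "is_int_partition n ps \<longleftrightarrow> sorted_wrt (\<ge>) ps \<and> (\<forall>x\<in>set ps. 1 \<le> x) \<and> sum_list ps = n"

definition partition_eigenvalue :: "nat list \<Rightarrow> real" where
  "partition_eigenvalue ps =
     (\<Sum>i<length ps. real (ps ! i) * (real (ps ! i) - 2 * real (i + 1) + 1) / 2)"

definition corresponds_to_eigenvalue :: "nat list \<Rightarrow> real \<Rightarrow> bool" where
  "corresponds_to_eigenvalue ps lam \<longleftrightarrow> lam = partition_eigenvalue ps"

end

theory Submission
  imports Defs
begin

lemma ev_cons3:
  "partition_eigenvalue (a # b # c # rest) =
     real a * (real a - 1) / 2 + real b * (real b - 3) / 2 + real c * (real c - 5) / 2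
     + (\<Sum>i<length rest. real (rest ! i) * (real (rest ! i) - 2 * real (i + 4) + 1) / 2)"
  unfolding partition_eigenvalue_def
  by (simp add: sum.lessThan_Suc_shift algebra_simps del: sum.lessThan_Suc)

theorem lemma3:
  fixes n n1 n2 :: nat and rest :: "nat list" and lam :: real
  assumes "is_int_partition n (n1 # n2 # 2 # rest)"
    and "n2 \<ge> 3"
    and "corresponds_to_eigenvalue (n1 # n2 # 2 # rest) lam"
  shows "is_int_partition (n + 1) (n1 # n2 # 3 # rest)
       \<and> corresponds_to_eigenvalue (n1 # n2 # 3 # rest) lam"
proof
  show "is_int_partition (n + 1) (n1 # n2 # 3 # rest)"
    using assms(1,2) unfolding is_int_partition_def by auto
  show "corresponds_to_eigenvalue (n1 # n2 # 3 # rest) lam"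
    using assms(3) unfolding corresponds_to_eigenvalue_def ev_cons3 by simp
qed

end
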